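(* Let $n\ge2$ be an integer, $l_k=\pi k/n$, $S_n=\sum_{k=1}^{n-1}\csc l_k$, $c_k=\cos\frac{\pi(2k-1)}{2n}$, $\sigma_k(\phi)=(1-c_k^2\cos^2\phi)^{1/2}$, and $V(\phi)=\frac{S_n}{4\cos\phi}+\frac14\sum_{k=1}^n\frac{1}{\sigma_k(\phi)}$ for $\phi\in(-\pi/2,\pi/2)$. Then $V$ has exactly three critical points in $(-\pi/2,\pi/2)$, all non-degenerate; they are $-\phi_R,0,\phi_R$ with $\phi_R\in(0,\pi/4)$.
   Context: $V$ is the shape potential, in Devaney-type coordinates $(q_1,q_2)=r(\cos\phi,2\sin\phi)$, of the spatial double-polygon problem ($2n$ unit masses forming two congruent regular $n$-gons in parallel horizontal planes, centered on the $z$-axis and twisted relative to each other). *)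

theory Defs
  imports "HOL-Analysis.Analysis"
begin

definition S_n :: "nat \<Rightarrow> real" where
  "S_n n = (\<Sum>k=1..n-1. 1 / sin (pi * real k / real n))"

definition c_k :: "nat \<Rightarrow> nat \<Rightarrow> real" where
  "c_k n k = cos (pi * (2 * real k - 1) / (2 * real n))"

definition sigma_k :: "nat \<Rightarrow> nat \<Rightarrow> real \<Rightarrow> real" where
  "sigma_k n k \<phi> = sqrt (1 - (c_k n k)^2 * (cos \<phi>)^2)"

definition Vpot :: "nat \<Rightarrow> real \<Rightarrow> real" where
  "Vpot n \<phi> = S_n n / (4 * cos \<phi>) + (1/4) * (\<Sum>k=1..n. 1 / sigma_k n k \<phi>)"

end

theory Submission
  imports Defs
begin


lemma ck_sq_lt1:
  assumes "1 \<le> k" "k \<le> n"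
  shows "(c_k n k)^2 < 1"
proof -
  let ?t = "pi * (2 * real k - 1) / (2 * real n)"
  have n0: "real n > 0" using assms by auto
  have "0 < ?t" using assms n0 by (auto intro!: divide_pos_pos)
  moreover have "?t < pi"
  proof -
    have "real k \<le> real n" using assms by simp
    hence "pi * (2 * real k - 1) < pi * (2 * real n)" using pi_gt_zero by (intro mult_strict_left_mono) auto
    thus ?thesis using n0 by (simp add: divide_less_eq)
  qed
  ultimately have "sin ?t > 0" by (rule sin_gt_zero)
  hence "(cos ?t)^2 < 1" using sin_cos_squared_add[of ?t]
    by (smt (verit) zero_less_power)
  thus ?thesis by (simp add: c_k_def)
qed

lemma w_pos:
  assumes "1 \<le> k" "k \<le> n" "\<bar>u\<bar> \<le> 1"
  shows "1 - (c_k n k)^2 * u^2 > 0"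
proof -
  have "u^2 \<le> 1" using assms(3) by (simp add: abs_square_le_1)
  moreover have "(c_k n k)^2 < 1" using ck_sq_lt1 assms by auto
  ultimately have "(c_k n k)^2 * u^2 < 1"
    by (smt (verit) mult_left_le zero_le_power2)
  thus ?thesis by simp
qed

lemma term_deriv:
  fixes a u :: real
  assumes "1 - a*u^2 > 0"
  shows "((\<lambda>u. a * u^3 / (sqrt(1 - a*u^2))^3) has_real_derivative 3*a*u^2/(sqrt(1-a*u^2))^5) (at u)"
proof -
  define s where "s = sqrt(1 - a*u^2)"
  have s0: "s > 0" using assms s_def by simp
  have s2: "s^2 = 1 - a*u^2" using assms s_def by simp
  show ?thesis
    using assms apply (auto intro!: derivative_eq_intros)
    apply (simp only: s_def[symmetric])
    apply (simp only: s2[symmetric])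
    using s0 apply (simp add: field_simps)
    using s2 by algebra
qed

lemma inv_sigma_deriv:
  fixes a x :: real
  assumes "1 - a*(cos x)^2 > 0"
  shows "((\<lambda>x. 1 / sqrt(1 - a*(cos x)^2)) has_real_derivative -(a * cos x * sin x)/(sqrt(1-a*(cos x)^2))^3) (at x)"
proof -
  define s where "s = sqrt(1 - a*(cos x)^2)"
  have s0: "s > 0" using assms s_def by simp
  have s2: "s^2 = 1 - a*(cos x)^2" using assms s_def by simp
  show ?thesis
    using assms apply (auto intro!: derivative_eq_intros)
    apply (simp only: s_def[symmetric])
    apply (simp only: s2[symmetric])
    using s0 by (simp add: field_simps power3_eq_cube power2_eq_square)
qed

definition gf :: "nat \<Rightarrow> real \<Rightarrow> real" where
  "gf n u = (\<Sum>k=1..n. (c_k n k)^2 * u^3 / (sqrt(1 - (c_k n k)^2 * u^2))^3)"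

definition gd :: "nat \<Rightarrow> real \<Rightarrow> real" where
  "gd n u = (\<Sum>k=1..n. 3*(c_k n k)^2 * u^2 / (sqrt(1 - (c_k n k)^2 * u^2))^5)"

definition D1 :: "nat \<Rightarrow> real \<Rightarrow> real" where
  "D1 n x = sin x / (4 * (cos x)^2) * (S_n n - gf n (cos x))"

definition D2 :: "nat \<Rightarrow> real \<Rightarrow> real" where
  "D2 n x = ((cos x)^3 + 2 * (sin x)^2 * cos x) / (4 * (cos x)^4) * (S_n n - gf n (cos x))
           + sin x / (4 * (cos x)^2) * (sin x * gd n (cos x))"

lemma gf_deriv:
  assumes "\<bar>u\<bar> \<le> 1"
  shows "(gf n has_real_derivative gd n u) (at u)"
proof -
  have "((\<lambda>u. \<Sum>k=1..n. (c_k n k)^2 * u^3 / (sqrt(1 - (c_k n k)^2 * u^2))^3)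
     has_real_derivative (\<Sum>k=1..n. 3*(c_k n k)^2 * u^2 / (sqrt(1 - (c_k n k)^2 * u^2))^5)) (at u)"
    by (rule DERIV_sum, rule term_deriv, rule w_pos) (use assms in auto)
  thus ?thesis unfolding gf_def[abs_def] gd_def by simp
qed

lemma V_deriv:
  assumes "x \<in> {-pi/2<..<pi/2}"
  shows "(Vpot n has_real_derivative D1 n x) (at x)"
proof -
  have cx: "cos x > 0" using assms by (auto intro: cos_gt_zero_pi)
  have d1: "((\<lambda>x. S_n n / (4 * cos x)) has_real_derivative S_n n * sin x / (4 * (cos x)^2)) (at x)"
    using cx by (auto intro!: derivative_eq_intros simp: field_simps power2_eq_square)
  have d2: "((\<lambda>x. \<Sum>k=1..n. 1 / sqrt(1 - (c_k n k)^2*(cos x)^2)) has_real_derivative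
     (\<Sum>k=1..n. -((c_k n k)^2 * cos x * sin x)/(sqrt(1-(c_k n k)^2*(cos x)^2))^3)) (at x)"
    by (rule DERIV_sum, rule inv_sigma_deriv, rule w_pos) auto
  have d: "(Vpot n has_real_derivative S_n n * sin x / (4 * (cos x)^2) + 1/4 *
     (\<Sum>k=1..n. -((c_k n k)^2 * cos x * sin x)/(sqrt(1-(c_k n k)^2*(cos x)^2))^3)) (at x)"
    unfolding Vpot_def[abs_def] sigma_k_def
    by (intro DERIV_add d1 DERIV_cmult d2)
  have "sin x / (4 * (cos x)^2) * gf n (cos x) =
     (\<Sum>k=1..n. sin x / (4 * (cos x)^2) * ((c_k n k)^2 * (cos x)^3 / (sqrt(1 - (c_k n k)^2 * (cos x)^2))^3))"
    unfolding gf_def by (simp add: sum_distrib_left)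
  also have "\<dots> = 1/4 * (\<Sum>k=1..n. ((c_k n k)^2 * cos x * sin x)/(sqrt(1-(c_k n k)^2*(cos x)^2))^3)"
    unfolding sum_distrib_left
    by (rule sum.cong) (use cx in \<open>auto simp: field_simps power2_eq_square power3_eq_cube\<close>)
  finally have e: "sin x / (4 * (cos x)^2) * gf n (cos x) =
     1/4 * (\<Sum>k=1..n. ((c_k n k)^2 * cos x * sin x)/(sqrt(1-(c_k n k)^2*(cos x)^2))^3)" .
  have "D1 n x = S_n n * sin x / (4 * (cos x)^2) + 1/4 *
     (\<Sum>k=1..n. -((c_k n k)^2 * cos x * sin x)/(sqrt(1-(c_k n k)^2*(cos x)^2))^3)"
    unfolding D1_def right_diff_distrib e by (simp add: sum_negf)
  with d show ?thesis by simp
qed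

lemma D1_deriv:
  assumes "x \<in> {-pi/2<..<pi/2}"
  shows "(D1 n has_real_derivative D2 n x) (at x)"
proof -
  have cx: "cos x > 0" using assms by (auto intro: cos_gt_zero_pi)
  have dP: "((\<lambda>x. sin x / (4 * (cos x)^2)) has_real_derivative
      ((cos x)^3 + 2 * (sin x)^2 * cos x) / (4 * (cos x)^4)) (at x)"
    using cx by (auto intro!: derivative_eq_intros simp: field_simps power2_eq_square power3_eq_cube eval_nat_numeral)
  have dG: "((\<lambda>x. gf n (cos x)) has_real_derivative gd n (cos x) * (- sin x)) (at x)"
    by (rule DERIV_chain2[OF gf_deriv]) (auto intro!: derivative_eq_intros abs_cos_le_one)
  have dQ: "((\<lambda>x. S_n n - gf n (cos x)) has_real_derivative sin x * gd n (cos x)) (at x)"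
    using DERIV_diff[OF DERIV_const[of "S_n n"] dG] by (simp add: mult.commute)
  show ?thesis
    unfolding D1_def[abs_def] D2_def
    using DERIV_mult'[OF dP dQ] by (simp add: algebra_simps)
qed



lemma c1_pos: assumes "n \<ge> 2" shows "c_k n 1 > 0"
proof -
  have "pi * (2 * real 1 - 1) / (2 * real n) < pi/2" using assms by (simp add: field_simps)
  moreover have "0 < pi * (2 * real 1 - 1) / (2 * real n)" using assms by simp
  ultimately show ?thesis unfolding c_k_def by (intro cos_gt_zero_pi) auto
qed

lemma tele: "(\<Sum>k=1..(m::nat). (f k - f (k-1))) = f m - (f 0 :: real)"
  by (induction m) (auto simp: sum.cl_ivl_Suc)

lemma sum_cos_zero:
  assumes "n \<ge> 2"
  shows "(\<Sum>k=1..n. cos (pi * (2 * real k - 1) / real n)) = 0"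
proof -
  define f where "f k = sin (2 * pi * real k / real n)" for k :: nat
  have n0: "real n > 0" using assms by simp
  have sn: "sin (pi / real n) > 0" using assms by (intro sin_gt_zero) (auto simp: field_simps)
  have "2 * sin (pi / real n) * (\<Sum>k=1..n. cos (pi * (2 * real k - 1) / real n))
        = (\<Sum>k=1..n. (f k - f (k-1)))"
    unfolding sum_distrib_left
  proof (rule sum.cong[OF refl])
    fix k assume k: "k \<in> {1..n}"
    let ?a = "pi * (2 * real k - 1) / real n" and ?b = "pi / real n"
    have "sin (?a + ?b) - sin (?a - ?b) = 2 * sin ?b * cos ?a"
      by (simp add: sin_add sin_diff)
    moreover have "?a + ?b = 2 * pi * real k / real n" using n0 by (simp add: field_simps)
    moreover have "?a - ?b = 2 * pi * real (k-1) / real n" using k n0 by (simp add: of_nat_diff field_simps)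
    ultimately show "2 * sin ?b * cos ?a = f k - f (k-1)" unfolding f_def by simp
  qed
  also have "\<dots> = f n - f 0" by (rule tele)
  also have "\<dots> = 0" unfolding f_def using assms by simp
  finally show ?thesis using sn by simp
qed

lemma sum_ck_sq:
  assumes "n \<ge> 2"
  shows "(\<Sum>k=1..n. (c_k n k)^2) = real n / 2"
proof -
  have "(\<Sum>k=1..n. (c_k n k)^2) = (\<Sum>k=1..n. (1 + cos (pi * (2 * real k - 1) / real n)) / 2)"
  proof (rule sum.cong[OF refl])
    fix k
    have "cos (2 * (pi * (2 * real k - 1) / (2 * real n))) = 2 * (c_k n k)^2 - 1"
      unfolding c_k_def by (rule cos_double_cos)
    moreover have "2 * (pi * (2 * real k - 1) / (2 * real n)) = pi * (2 * real k - 1) / real n"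
      by simp
    ultimately show "(c_k n k)^2 = (1 + cos (pi * (2 * real k - 1) / real n)) / 2" by simp
  qed
  also have "\<dots> = (\<Sum>k=1..n. 1/2) + (\<Sum>k=1..n. cos (pi * (2 * real k - 1) / real n)) / 2"
    by (simp add: sum.distrib add_divide_distrib sum_divide_distrib)
  also have "\<dots> = real n / 2" using sum_cos_zero[OF assms] by simp
  finally show ?thesis .
qed


lemma term_half:
  fixes a :: real
  assumes "0 \<le> a" "a \<le> 1"
  shows "a * (sqrt 2/2)^3/(sqrt(1-a*(sqrt 2/2)^2))^3 \<le> a"
    and "0 < a \<Longrightarrow> a < 1 \<Longrightarrow> a * (sqrt 2/2)^3/(sqrt(1-a*(sqrt 2/2)^2))^3 < a"
proof -
  define u where "u = sqrt 2 / 2"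
  have u2: "u^2 = 1/2" unfolding u_def by (simp add: power_divide)
  have u0: "u > 0" unfolding u_def by simp
  define s where "s = sqrt(1-a*u^2)"
  have s0: "s > 0" unfolding s_def u2 using assms by simp
  have s2: "s^2 = 1 - a/2" unfolding s_def u2 using assms by simp
  have "u^2 \<le> s^2" using u2 s2 assms by simp
  hence us: "u \<le> s" using power2_le_imp_le less_imp_le[OF s0] by blast
  have q: "(u/s)^3 \<le> 1" using us u0 s0 by (simp add: power_le_one)
  have eq: "a * u^3/s^3 = a * (u/s)^3" by (simp add: power_divide)
  show "a * (sqrt 2/2)^3/(sqrt(1-a*(sqrt 2/2)^2))^3 \<le> a"
    unfolding u_def[symmetric] s_def[symmetric] eq using q assms
    by (simp add: mult_left_le)
  assume a: "0 < a" "a < 1"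
  have "u^2 < s^2" using u2 s2 a by simp
  hence "u < s" using power2_less_imp_less less_imp_le[OF s0] by blast
  hence "u/s < 1" using s0 by simp
  hence "(u/s)^3 < 1" using u0 s0 by (simp add: power_less_one_iff)
  thus "a * (sqrt 2/2)^3/(sqrt(1-a*(sqrt 2/2)^2))^3 < a"
    unfolding u_def[symmetric] s_def[symmetric] eq using a by simp
qed

lemma S_ge: assumes "n \<ge> 2" shows "S_n n \<ge> real n - 1"
proof -
  have "(\<Sum>k=1..n-1. (1::real)) \<le> S_n n"
    unfolding S_n_def
  proof (rule sum_mono)
    fix k assume k: "k \<in> {1..n-1}"
    have "0 < sin (pi * real k / real n)"
      using k assms by (intro sin_gt_zero) (auto simp: field_simps)
    moreover have "sin (pi * real k / real n) \<le> 1" by simp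
    ultimately show "1 \<le> 1 / sin (pi * real k / real n)" by simp
  qed
  thus ?thesis using assms by (simp add: of_nat_diff)
qed

lemma K1: assumes "n \<ge> 2" shows "gf n (sqrt 2/2) < S_n n"
proof -
  have "gf n (sqrt 2/2) < (\<Sum>k=1..n. (c_k n k)^2)"
    unfolding gf_def
  proof (rule sum_strict_mono_ex1)
    show "\<forall>k\<in>{1..n}. (c_k n k)^2 * (sqrt 2/2)^3/(sqrt(1-(c_k n k)^2*(sqrt 2/2)^2))^3 \<le> (c_k n k)^2"
    proof
      fix k assume "k \<in> {1..n}"
      hence "(c_k n k)^2 < 1" using ck_sq_lt1 by auto
      thus "(c_k n k)^2 * (sqrt 2/2)^3/(sqrt(1-(c_k n k)^2*(sqrt 2/2)^2))^3 \<le> (c_k n k)^2"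
        by (intro term_half(1)) auto
    qed
    have "0 < (c_k n 1)^2" using c1_pos[OF assms] by simp
    moreover have "(c_k n 1)^2 < 1" using ck_sq_lt1 assms by simp
    ultimately show "\<exists>k\<in>{1..n}. (c_k n k)^2 * (sqrt 2/2)^3/(sqrt(1-(c_k n k)^2*(sqrt 2/2)^2))^3 < (c_k n k)^2"
      using assms by (intro bexI[of _ 1]) (auto intro!: term_half(2))
  qed simp
  also have "\<dots> = real n / 2" by (rule sum_ck_sq[OF assms])
  also have "\<dots> \<le> real n - 1" using assms by simp
  also have "\<dots> \<le> S_n n" by (rule S_ge[OF assms])
  finally show ?thesis .
qed



lemma sin_ge_first:
  assumes "n \<ge> 2" "1 \<le> k" "k \<le> n - 1"
  shows "sin (pi / real n) \<le> sin (pi * real k / real n)"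
proof (cases "2 * k \<le> n")
  case True
  have n0: "real n > 0" using assms by simp
  have "pi * real k / real n \<le> pi / 2"
  proof -
    have "real (2*k) \<le> real n" using True by linarith
    hence "2 * real k \<le> real n" by simp
    hence "pi * (2 * real k) \<le> pi * real n" by (intro mult_left_mono) auto
    thus ?thesis using n0 by (simp add: field_simps)
  qed
  moreover have "pi / real n \<le> pi * real k / real n" using assms n0
    by (simp add: divide_right_mono)
  moreover have "0 \<le> pi / real n" by simp
  ultimately show ?thesis using sin_mono_le_eq[of "pi/real n" "pi*real k/real n"] pi_gt_zero by linarith
next
  case False
  define j where "j = n - k"
  have j: "1 \<le> j" "2 * j \<le> n" "k = n - j" using assms False unfolding j_def by auto
  have n0: "real n > 0" using assms by simp
  have "pi * real k / real n = pi - pi * real j / real n"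
    using j assms n0 by (simp add: of_nat_diff field_simps)
  hence eq: "sin (pi * real k / real n) = sin (pi * real j / real n)" by simp
  have "pi * real j / real n \<le> pi / 2"
  proof -
    have "real (2*j) \<le> real n" using j by linarith
    hence "2 * real j \<le> real n" by simp
    hence "pi * (2 * real j) \<le> pi * real n" by (intro mult_left_mono) auto
    thus ?thesis using n0 by (simp add: field_simps)
  qed
  moreover have "pi / real n \<le> pi * real j / real n" using j n0
    by (simp add: divide_right_mono)
  moreover have "0 \<le> pi / real n" by simp
  ultimately show ?thesis unfolding eq using sin_mono_le_eq[of "pi/real n" "pi*real j/real n"] pi_gt_zero by linarith
qed

lemma S_le:
  assumes "n \<ge> 2"
  shows "S_n n \<le> (real n - 1) / sin (pi / real n)"
proof -
  have sp: "sin (pi / real n) > 0" using assms by (intro sin_gt_zero) (auto simp: field_simps)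
  have "S_n n \<le> (\<Sum>k=1..n-1. 1 / sin (pi / real n))"
    unfolding S_n_def
  proof (rule sum_mono)
    fix k assume "k \<in> {1..n-1}"
    hence "sin (pi / real n) \<le> sin (pi * real k / real n)" using sin_ge_first assms by auto
    thus "1 / sin (pi * real k / real n) \<le> 1 / sin (pi / real n)" using sp
      by (intro divide_left_mono) auto
  qed
  thus ?thesis using assms by (simp add: of_nat_diff)
qed

lemma K2: assumes "n \<ge> 2" shows "S_n n < gf n 1"
proof -
  define t where "t = pi / (2 * real n)"
  define s where "s = sin t"
  define c where "c = cos t"
  have n0: "real n > 0" using assms by simp
  have t0: "0 < t" unfolding t_def using n0 by simp
  have t4: "t \<le> pi / 4" unfolding t_def using assms n0 by (simp add: field_simps)
  have s0: "s > 0" unfolding s_def using t0 t4 by (intro sin_gt_zero) auto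
  have c1: "c_k n 1 = c" unfolding c_k_def c_def t_def by simp
  have cn: "c_k n n = - c"
  proof -
    have "pi * (2 * real n - 1) / (2 * real n) = pi - t" unfolding t_def using n0 by (simp add: field_simps)
    thus ?thesis unfolding c_k_def c_def by simp
  qed
  have c0: "c > 0" using c1 c1_pos[OF assms] by simp
  have sq: "sqrt (1 - c^2) = s" unfolding s_def c_def using s0 s_def
    by (simp add: sin_squared_eq[symmetric])
  have "(\<Sum>k\<in>{1,n}. (c_k n k)^2 * 1^3 / (sqrt(1 - (c_k n k)^2 * 1^2))^3) \<le> gf n 1"
    unfolding gf_def
  proof (rule sum_mono2)
    show "{1,n} \<subseteq> {1..n}" using assms by auto
  next
    fix b assume "b \<in> {1..n} - {1,n}"
    hence "1 - (c_k n b)^2 * 1^2 > 0" by (intro w_pos) auto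
    thus "0 \<le> (c_k n b)^2 * 1^3 / (sqrt(1 - (c_k n b)^2 * 1^2))^3" by simp
  qed auto
  moreover have "(\<Sum>k\<in>{1,n}. (c_k n k)^2 * 1^3 / (sqrt(1 - (c_k n k)^2 * 1^2))^3) = 2 * c^2 / s^3"
    using assms c1 cn sq by simp
  ultimately have g: "2 * c^2 / s^3 \<le> gf n 1" by simp
  have sd: "sin (pi / real n) = 2 * s * c"
    unfolding s_def c_def using sin_double[of t] unfolding t_def by simp
  have sle: "s \<le> t" unfolding s_def using sin_x_le_x t0 by simp
  have "c \<ge> cos (pi/4)" unfolding c_def using t0 t4 by (intro cos_monotone_0_pi_le) auto
  hence cge: "c \<ge> sqrt 2 / 2" by (simp add: cos_45)
  have "(sqrt 2 / 2)^3 \<le> c^3" using cge by (intro power_mono) auto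
  moreover have "(sqrt 2 / 2)^3 = sqrt 2 / 4"
    by (simp add: power3_eq_cube)
  ultimately have c3: "sqrt 2 \<le> 4 * c^3" by simp
  have sqrt2: "1.41 < sqrt 2" by (rule real_less_rsqrt) (simp add: power2_eq_square)
  have pi2: "pi^2 < 9.87"
  proof -
    have "pi \<le> 3.1416" using pi_approx by simp
    hence "pi^2 \<le> 3.1416^2" by (intro power_mono) auto
    moreover have "(3.1416::real)^2 < 9.87" by (simp add: power2_eq_square)
    ultimately show ?thesis by linarith
  qed
  have "(real n - 1) * s^2 < real n * s^2" using s0 by simp
  also have "\<dots> \<le> real n * t^2" using sle s0 by (intro mult_left_mono power_mono) auto
  also have "\<dots> = pi^2 / (4 * real n)" unfolding t_def using n0 by (simp add: field_simps power2_eq_square)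
  also have "\<dots> \<le> pi^2 / 8" using assms by (intro divide_left_mono) auto
  also have "\<dots> < 4 * c^3" using pi2 sqrt2 c3 by simp
  finally have key: "(real n - 1) * s^2 < 4 * c^3" .
  have key2: "(real n - 1) * s^2 * s < 4 * c^3 * s" using mult_strict_right_mono[OF key s0] .
  have "(real n - 1) / sin (pi / real n) < 2 * c^2 / s^3"
    unfolding sd using key2 s0 c0 by (simp add: field_simps power2_eq_square power3_eq_cube)
  thus ?thesis using S_le[OF assms] g by simp
qed



lemma term_mono:
  fixes a u v :: real
  assumes "0 \<le> a" "a < 1" "0 < u" "u < v" "v \<le> 1"
  shows "a * u^3/(sqrt(1 - a * u^2))^3 \<le> a * v^3/(sqrt(1 - a * v^2))^3"
    and "0 < a \<Longrightarrow> a * u^3/(sqrt(1 - a * u^2))^3 < a * v^3/(sqrt(1 - a * v^2))^3"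
proof -
  define su where "su = sqrt(1 - a * u^2)"
  define sv where "sv = sqrt(1 - a * v^2)"
  have v2: "v^2 \<le> 1" using assms by (simp add: power_le_one)
  have "a * v^2 \<le> a" using v2 assms by (simp add: mult_left_le)
  hence sv0: "sv > 0" unfolding sv_def using assms by simp
  have "u^2 \<le> v^2" using assms by (intro power_mono) auto
  hence "a * u^2 \<le> a * v^2" using assms by (intro mult_left_mono) auto
  hence svu: "sv \<le> su" unfolding sv_def su_def by simp
  have "u/su < v/su" using assms sv0 svu by (simp add: divide_strict_right_mono)
  also have "v/su \<le> v/sv" using assms sv0 svu by (intro divide_left_mono) auto
  finally have q: "u/su < v/sv" .
  have q3: "(u/su)^3 < (v/sv)^3"
    using q assms sv0 svu by (intro power_strict_mono) auto
  have e1: "a * u^3/su^3 = a * (u/su)^3" by (simp add: power_divide)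
  have e2: "a * v^3/sv^3 = a * (v/sv)^3" by (simp add: power_divide)
  show "a * u^3/(sqrt(1 - a * u^2))^3 \<le> a * v^3/(sqrt(1 - a * v^2))^3"
    unfolding su_def[symmetric] sv_def[symmetric] e1 e2 using q3 assms
    by (intro mult_left_mono) auto
  assume "0 < a"
  thus "a * u^3/(sqrt(1 - a * u^2))^3 < a * v^3/(sqrt(1 - a * v^2))^3"
    unfolding su_def[symmetric] sv_def[symmetric] e1 e2 using q3
    by (intro mult_strict_left_mono) auto
qed

lemma gf_strict:
  assumes "n \<ge> 2" "0 < u" "u < v" "v \<le> 1"
  shows "gf n u < gf n v"
  unfolding gf_def
proof (rule sum_strict_mono_ex1)
  show "\<forall>k\<in>{1..n}. (c_k n k)^2 * u^3 / (sqrt(1 - (c_k n k)^2 * u^2))^3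
      \<le> (c_k n k)^2 * v^3 / (sqrt(1 - (c_k n k)^2 * v^2))^3"
  proof
    fix k assume "k \<in> {1..n}"
    hence "(c_k n k)^2 < 1" using ck_sq_lt1 by auto
    thus "(c_k n k)^2 * u^3 / (sqrt(1 - (c_k n k)^2 * u^2))^3
      \<le> (c_k n k)^2 * v^3 / (sqrt(1 - (c_k n k)^2 * v^2))^3"
      using assms by (intro term_mono(1)) auto
  qed
  have "0 < (c_k n 1)^2" using c1_pos[OF assms(1)] by simp
  moreover have "(c_k n 1)^2 < 1" using ck_sq_lt1 assms by simp
  ultimately show "\<exists>k\<in>{1..n}. (c_k n k)^2 * u^3 / (sqrt(1 - (c_k n k)^2 * u^2))^3
      < (c_k n k)^2 * v^3 / (sqrt(1 - (c_k n k)^2 * v^2))^3"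
    using assms by (intro bexI[of _ 1]) (auto intro!: term_mono(2))
qed simp

lemma gd_pos:
  assumes "n \<ge> 2" "0 < u" "u \<le> 1"
  shows "gd n u > 0"
proof -
  have w: "\<And>k. k \<in> {1..n} \<Longrightarrow> 1 - (c_k n k)^2 * u^2 > 0" using assms by (intro w_pos) auto
  have t1: "0 < 3 * (c_k n 1)^2 * u^2 / (sqrt (1 - (c_k n 1)^2 * u^2))^5"
    using c1_pos[OF assms(1)] assms w[of 1] by simp
  have tk: "0 \<le> 3 * (c_k n k)^2 * u^2 / (sqrt (1 - (c_k n k)^2 * u^2))^5" if "k \<in> {1..n}" for k
  proof -
    have "1 - (c_k n k)^2 * u^2 > 0" using w that .
    thus ?thesis by simp
  qed
  show ?thesis unfolding gd_def
    by (rule sum_pos2[where i=1]) (use assms t1 tk in auto)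
qed

lemma gf_cont: "continuous_on {0..pi/4} (\<lambda>x. gf n (cos x))"
proof -
  have w: "(c_k n k)^2 * (cos x)^2 < 1" if "1 \<le> k" "k \<le> n" for k x
  proof -
    have "1 - (c_k n k)^2 * (cos x)^2 > 0" using that by (intro w_pos) auto
    thus ?thesis by simp
  qed
  show ?thesis unfolding gf_def
    apply (intro continuous_intros)
    apply auto
    subgoal for k x using w[of k x] by simp
    done
qed



lemma deriv_V_eq:
  assumes "x \<in> {-pi/2<..<pi/2}"
  shows "deriv (Vpot n) x = D1 n x"
  by (rule DERIV_imp_deriv[OF V_deriv[OF assms]])

lemma deriv2_V_eq:
  assumes "x \<in> {-pi/2<..<pi/2}"
  shows "deriv (deriv (Vpot n)) x = D2 n x"
proof -
  have "eventually (\<lambda>y. y \<in> {-pi/2<..<pi/2}) (nhds x)"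
    by (rule eventually_nhds_in_open) (use assms in auto)
  hence ev: "eventually (\<lambda>y. deriv (Vpot n) y = D1 n y) (nhds x)"
    by (rule eventually_mono) (rule deriv_V_eq)
  have "deriv (deriv (Vpot n)) x = deriv (D1 n) x" by (rule deriv_cong_ev[OF ev refl])
  also have "\<dots> = D2 n x" by (rule DERIV_imp_deriv[OF D1_deriv[OF assms]])
  finally show ?thesis .
qed

theorem lemma5p3:
  fixes n :: nat
  assumes "n \<ge> 2"
  shows "\<exists>\<phi>R. 0 < \<phi>R \<and> \<phi>R < pi/4 \<and>
    {\<phi> \<in> {-pi/2<..<pi/2}. deriv (Vpot n) \<phi> = 0} = {-\<phi>R, 0, \<phi>R} \<and>
    (\<forall>\<phi>\<in>{-\<phi>R, 0, \<phi>R}. deriv (deriv (Vpot n)) \<phi> \<noteq> 0)"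
proof -
  have k1: "gf n (cos (pi/4)) < S_n n" using K1[OF assms] by (simp add: cos_45)
  have k2: "S_n n < gf n (cos 0)" using K2[OF assms] by simp
  obtain r where r: "0 \<le> r" "r \<le> pi/4" "gf n (cos r) = S_n n"
    using IVT2'[of "\<lambda>x. gf n (cos x)" "pi/4" "S_n n" 0] k1 k2 gf_cont[of n] by force
  have r0: "r \<noteq> 0" using r k2 by auto
  have r4: "r \<noteq> pi/4"
  proof
    assume "r = pi/4"
    with r(3) k1 show False by simp
  qed
  have rpos: "0 < r" "r < pi/4" using r r0 r4 by auto
  have I: "\<And>x. x \<in> {-pi/2<..<pi/2} \<Longrightarrow> cos x > 0 \<and> cos x \<le> 1"
    by (auto intro: cos_gt_zero_pi)
  have gchar: "gf n (cos x) = S_n n \<longleftrightarrow> x = r \<or> x = -r" if x: "x \<in> {-pi/2<..<pi/2}" for x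
  proof
    assume g: "gf n (cos x) = S_n n"
    have cx: "cos x > 0" "cos x \<le> 1" using I[OF x] by auto
    have cr: "cos r > 0" "cos r \<le> 1" using I[of r] rpos pi_gt_zero by auto
    have "cos x = cos r"
    proof (rule ccontr)
      assume "cos x \<noteq> cos r"
      hence "cos x < cos r \<or> cos r < cos x" by linarith
      thus False
      proof
        assume "cos x < cos r"
        from gf_strict[OF assms cx(1) this cr(2)] g r(3) show False by simp
      next
        assume "cos r < cos x"
        from gf_strict[OF assms cr(1) this cx(2)] g r(3) show False by simp
      qed
    qed
    hence "cos \<bar>x\<bar> = cos r" by simp
    moreover have xb: "-(pi/2) < x" "x < pi/2" using x by auto
    moreover have "\<bar>x\<bar> \<le> pi" using xb pi_gt_zero by (simp add: abs_le_iff)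
    moreover have "r \<le> pi" using rpos pi_gt_zero by linarith
    ultimately have "\<bar>x\<bar> = r" using rpos by (rule_tac cos_inj_pi) simp_all
    thus "x = r \<or> x = -r" by auto
  next
    assume "x = r \<or> x = -r"
    thus "gf n (cos x) = S_n n" using r(3) by auto
  qed
  have D1zero: "D1 n x = 0 \<longleftrightarrow> x = 0 \<or> x = r \<or> x = -r" if x: "x \<in> {-pi/2<..<pi/2}" for x
  proof -
    have cx: "cos x > 0" using I[OF x] by auto
    have "D1 n x = 0 \<longleftrightarrow> sin x = 0 \<or> gf n (cos x) = S_n n"
      unfolding D1_def using cx by auto
    also have "sin x = 0 \<longleftrightarrow> x = 0" using x by (intro sin_zero_pi_iff) auto
    finally show ?thesis using gchar[OF x] by auto
  qed
  have rI: "r \<in> {-pi/2<..<pi/2}" "-r \<in> {-pi/2<..<pi/2}" "0 \<in> {-pi/2<..<pi/2::real}"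
    using rpos by auto
  have set: "{\<phi> \<in> {-pi/2<..<pi/2}. deriv (Vpot n) \<phi> = 0} = {-r, 0, r}"
  proof (intro set_eqI iffI)
    fix x assume "x \<in> {\<phi> \<in> {-pi/2<..<pi/2}. deriv (Vpot n) \<phi> = 0}"
    hence x: "x \<in> {-pi/2<..<pi/2}" and "deriv (Vpot n) x = 0" by auto
    hence "D1 n x = 0" using deriv_V_eq by simp
    thus "x \<in> {-r, 0, r}" using D1zero[OF x] by auto
  next
    fix x assume x: "x \<in> {-r, 0, r}"
    hence xI: "x \<in> {-pi/2<..<pi/2}" using rI by auto
    have "D1 n x = 0" using D1zero[OF xI] x by auto
    thus "x \<in> {\<phi> \<in> {-pi/2<..<pi/2}. deriv (Vpot n) \<phi> = 0}" using xI deriv_V_eq[OF xI] by simp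
  qed
  have nd: "deriv (deriv (Vpot n)) x \<noteq> 0" if x: "x \<in> {-r, 0, r}" for x
  proof -
    have xI: "x \<in> {-pi/2<..<pi/2}" using rI x by auto
    show ?thesis
    proof (cases "x = 0")
      case True
      have "D2 n 0 = (S_n n - gf n 1) / 4" unfolding D2_def by simp
      thus ?thesis using True deriv2_V_eq[OF xI] k2 by simp
    next
      case False
      have cx: "cos x > 0" "cos x \<le> 1" using I[OF xI] by auto
      have "sin x \<noteq> 0" using False xI by (subst sin_zero_pi_iff) auto
      hence sx: "(sin x)^2 > 0" by simp
      have g0: "gd n (cos x) > 0" using gd_pos[OF assms] cx by auto
      have gq: "gf n (cos x) = S_n n" using gchar[OF xI] x False by auto
      have "D2 n x = (sin x)^2 * gd n (cos x) / (4 * (cos x)^2)"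
        unfolding D2_def gq by (simp add: power2_eq_square)
      also have "\<dots> > 0" using sx g0 cx by simp
      finally show ?thesis using deriv2_V_eq[OF xI] by simp
    qed
  qed
  show ?thesis
    by (rule exI[of _ r]) (use rpos set nd in auto)
qed


end
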